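(* Let $G$ be a finite simple graph with no isolated vertices in which every vertex has even degree, and let $C$ be a connected component of $G$. Then either $C$ contains a triangle, or $C$ contains a path of length five (a path with five edges on six distinct vertices), or $C$ is isomorphic to one of: the cycle $C_4$, the cycle $C_5$, or the complete bipartite graph $K_{2,m}$ with $m\ge 4$ even.
   Context: Graphs are undirected, without loops or multiple edges. *)

theory Defs
  imports Main
begin

definition simple_graph :: "'a set \<Rightarrow> ('a \<Rightarrow> 'a \<Rightarrow> bool) \<Rightarrow> bool" where
  "simple_graph V E \<longleftrightarrow> finite V \<and> (\<forall>x y. E x y \<longrightarrow> x \<in> V \<and> y \<in> V)
     \<and> (\<forall>x y. E x y \<longrightarrow> E y x) \<and> (\<forall>x. \<not> E x x)"

definition degree :: "'a set \<Rightarrow> ('a \<Rightarrow> 'a \<Rightarrow> bool) \<Rightarrow> 'a \<Rightarrow> nat" where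
  "degree V E v = card {u \<in> V. E v u}"

definition is_component :: "'a set \<Rightarrow> ('a \<Rightarrow> 'a \<Rightarrow> bool) \<Rightarrow> 'a set \<Rightarrow> bool" where
  "is_component V E C \<longleftrightarrow> (\<exists>v \<in> V. C = {u. E\<^sup>*\<^sup>* v u})"

definition has_triangle :: "'a set \<Rightarrow> ('a \<Rightarrow> 'a \<Rightarrow> bool) \<Rightarrow> bool" where
  "has_triangle C E \<longleftrightarrow> (\<exists>a\<in>C. \<exists>b\<in>C. \<exists>c\<in>C. E a b \<and> E b c \<and> E a c)"

definition has_path :: "'a set \<Rightarrow> ('a \<Rightarrow> 'a \<Rightarrow> bool) \<Rightarrow> nat \<Rightarrow> bool" where
  "has_path C E k \<longleftrightarrow> (\<exists>p. length p = k + 1 \<and> distinct p \<and> set p \<subseteq> C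
      \<and> (\<forall>i<k. E (p ! i) (p ! Suc i)))"

definition graph_iso :: "'a set \<Rightarrow> ('a \<Rightarrow> 'a \<Rightarrow> bool) \<Rightarrow> 'b set \<Rightarrow> ('b \<Rightarrow> 'b \<Rightarrow> bool) \<Rightarrow> bool" where
  "graph_iso C E W F \<longleftrightarrow> (\<exists>f. bij_betw f C W \<and> (\<forall>x\<in>C. \<forall>y\<in>C. E x y \<longleftrightarrow> F (f x) (f y)))"

definition cycle_edge :: "nat \<Rightarrow> nat \<Rightarrow> nat \<Rightarrow> bool" where
  "cycle_edge n i j \<longleftrightarrow> i < n \<and> j < n \<and> (j = (i + 1) mod n \<or> i = (j + 1) mod n)"

definition K2m_edge :: "nat \<Rightarrow> nat \<Rightarrow> nat \<Rightarrow> bool" where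
  "K2m_edge m i j \<longleftrightarrow> i < m + 2 \<and> j < m + 2 \<and> ((i < 2 \<and> 2 \<le> j) \<or> (j < 2 \<and> 2 \<le> i))"

end

theory Submission
  imports Defs
begin

locale G =
  fixes V :: "'a set" and E :: "'a \<Rightarrow> 'a \<Rightarrow> bool" and C :: "'a set"
  assumes sg: "simple_graph V E"
    and nb: "\<forall>v\<in>V. \<exists>u. E v u"
    and ev: "\<forall>v\<in>V. even (degree V E v)"
    and comp: "is_component V E C"
    and notri: "\<not> has_triangle C E"
    and nop: "\<not> has_path C E 5"
begin

lemma sym: "E x y \<Longrightarrow> E y x" using sg by (auto simp: simple_graph_def)
lemma irr: "\<not> E x x" using sg by (auto simp: simple_graph_def)
lemma inV: "E x y \<Longrightarrow> x \<in> V" "E x y \<Longrightarrow> y \<in> V" using sg by (auto simp: simple_graph_def)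
lemma finV: "finite V" using sg by (auto simp: simple_graph_def)

lemma closed: "x \<in> C \<Longrightarrow> E x y \<Longrightarrow> y \<in> C"
  using comp unfolding is_component_def by (auto intro: rtranclp.rtrancl_into_rtrancl)

lemma symR: "E\<^sup>*\<^sup>* x y \<Longrightarrow> E\<^sup>*\<^sup>* y x"
  by (induction rule: rtranclp_induct) (auto intro: converse_rtranclp_into_rtranclp sym)

lemma reach: "a \<in> C \<Longrightarrow> u \<in> C \<Longrightarrow> E\<^sup>*\<^sup>* a u"
  using comp unfolding is_component_def by (auto intro: symR rtranclp_trans)

lemma Cne: "\<exists>x. x \<in> C \<and> x \<in> V"
  using comp unfolding is_component_def by auto

lemma tri: "a \<in> C \<Longrightarrow> E a b \<Longrightarrow> E b c \<Longrightarrow> E a c \<Longrightarrow> False"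
  using notri closed unfolding has_triangle_def by blast

lemma p6: assumes "a0 \<in> C" "E a0 a1" "E a1 a2" "E a2 a3" "E a3 a4" "E a4 a5"
   "distinct [a0,a1,a2,a3,a4,a5]" shows False
proof -
  have c: "a1 \<in> C" "a2 \<in> C" "a3 \<in> C" "a4 \<in> C" "a5 \<in> C" using assms closed by blast+
  have e: "\<forall>i<5. E ([a0,a1,a2,a3,a4,a5] ! i) ([a0,a1,a2,a3,a4,a5] ! Suc i)"
  proof (intro allI impI)
    fix i :: nat assume "i < 5"
    then have "i = 0 \<or> i = 1 \<or> i = 2 \<or> i = 3 \<or> i = 4" by auto
    then show "E ([a0,a1,a2,a3,a4,a5] ! i) ([a0,a1,a2,a3,a4,a5] ! Suc i)"
      using assms by auto
  qed
  have "has_path C E 5" unfolding has_path_def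
    apply (rule exI[of _ "[a0,a1,a2,a3,a4,a5]"])
    using assms c e by auto
  then show False using nop by simp
qed

lemma nb2: assumes "x \<in> C" "E x u" shows "\<exists>w. E x w \<and> w \<noteq> u"
proof (rule ccontr)
  assume H: "\<not> (\<exists>w. E x w \<and> w \<noteq> u)"
  have "{w\<in>V. E x w} = {u}"
  proof
    show "{w\<in>V. E x w} \<subseteq> {u}" using H by blast
    show "{u} \<subseteq> {w\<in>V. E x w}" using assms(2) inV(2)[OF assms(2)] by blast
  qed
  moreover have "x \<in> V" using inV(1)[OF assms(2)] .
  ultimately have "degree V E x = 1" by (simp add: degree_def)
  moreover have "even (degree V E x)" using ev \<open>x \<in> V\<close> by blast
  ultimately show False by simp
qed

lemma cyc: "(\<exists>a x b y. a \<in> C \<and> distinct [a,x,b,y] \<and> E a x \<and> E x b \<and> E b y \<and> E y a)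
  \<or> (\<exists>c0 c1 c2 c3 c4. c0 \<in> C \<and> distinct [c0,c1,c2,c3,c4] \<and> E c0 c1 \<and> E c1 c2 \<and> E c2 c3
      \<and> E c3 c4 \<and> E c4 c0)"
proof -
  obtain p0 where p0: "p0 \<in> C" "p0 \<in> V" using Cne by blast
  obtain p1 where 1: "E p0 p1" using nb p0 by blast
  have c1: "p1 \<in> C" using closed p0 1 by blast
  obtain p2 where 2: "E p1 p2" "p2 \<noteq> p0" using nb2[OF c1 sym[OF 1]] by blast
  have c2: "p2 \<in> C" using closed c1 2 by blast
  obtain p3 where 3: "E p2 p3" "p3 \<noteq> p1" using nb2[OF c2 sym[OF 2(1)]] by blast
  have c3: "p3 \<in> C" using closed c2 3 by blast
  obtain p4 where 4: "E p3 p4" "p4 \<noteq> p2" using nb2[OF c3 sym[OF 3(1)]] by blast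
  have c4: "p4 \<in> C" using closed c3 4 by blast
  obtain p5 where 5: "E p4 p5" "p5 \<noteq> p3" using nb2[OF c4 sym[OF 4(1)]] by blast
  have d01: "p0 \<noteq> p1" "p1 \<noteq> p2" "p2 \<noteq> p3" "p3 \<noteq> p4" "p4 \<noteq> p5" using 1 2 3 4 5 irr by auto
  have d03: "p3 \<noteq> p0" using tri[OF p0(1) 1 2(1)] 3 sym[of p2 p0] by blast
  have d14: "p4 \<noteq> p1" using tri[OF c1 2(1) 3(1)] 4 sym[of p3 p1] by blast
  have d25: "p5 \<noteq> p2" using tri[OF c2 3(1) 4(1)] 5 sym[of p4 p2] by blast
  show ?thesis
  proof (cases "p4 = p0")
    case True
    then show ?thesis using p0 1 2 3 4 d01 d03
      by (intro disjI1 exI[of _ p0] exI[of _ p1] exI[of _ p2] exI[of _ p3]) auto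
  next
    case n40: False
    show ?thesis
    proof (cases "p5 = p1")
      case True
      then show ?thesis using c1 1 2 3 4 5 d01 d03 d14 n40
        by (intro disjI1 exI[of _ p1] exI[of _ p2] exI[of _ p3] exI[of _ p4]) auto
    next
      case n51: False
      show ?thesis
      proof (cases "p5 = p0")
        case True
        then show ?thesis using p0 1 2 3 4 5 d01 d03 d14 n40
          by (intro disjI2 exI[of _ p0] exI[of _ p1] exI[of _ p2] exI[of _ p3] exI[of _ p4]) auto
      next
        case False
        have "distinct [p0,p1,p2,p3,p4,p5]" using False d01 d03 d14 d25 n40 n51 2 3 4 5 by auto
        then have False using p6[OF p0(1) 1 2(1) 3(1) 4(1) 5(1)] by blast
        then show ?thesis ..
      qed
    qed
  qed
qed


lemma c5n: assumes "c0 \<in> C" "distinct [c0,c1,c2,c3,c4]" "E c0 c1" "E c1 c2" "E c2 c3"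
  "E c3 c4" "E c4 c0" "E c0 w" shows "w = c1 \<or> w = c4"
proof (rule ccontr)
  assume nw: "\<not> (w = c1 \<or> w = c4)"
  have n0: "w \<noteq> c0" using assms(8) irr by blast
  have n2: "w \<noteq> c2" using tri[OF assms(1,3,4)] assms(8) by blast
  have n3: "w \<noteq> c3" using tri[OF assms(1) sym[OF assms(7)] sym[OF assms(6)]] assms(8) by blast
  have wC: "w \<in> C" using closed assms(1,8) by blast
  have "distinct [w,c0,c1,c2,c3,c4]" using assms(2) nw n0 n2 n3 by auto
  then show False using p6[OF wC sym[OF assms(8)] assms(3,4,5,6)] by blast
qed

lemma c5: assumes "c0 \<in> C" "distinct [c0,c1,c2,c3,c4]" "E c0 c1" "E c1 c2" "E c2 c3"
  "E c3 c4" "E c4 c0" shows "graph_iso C E {0..<5} (cycle_edge 5)"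
proof -
  have cC: "c1 \<in> C" "c2 \<in> C" "c3 \<in> C" "c4 \<in> C" using assms closed by blast+
  have d1: "distinct [c1,c2,c3,c4,c0]" "distinct [c2,c3,c4,c0,c1]" "distinct [c3,c4,c0,c1,c2]"
    "distinct [c4,c0,c1,c2,c3]" using assms(2) by auto
  have N0: "E c0 w \<longleftrightarrow> w = c1 \<or> w = c4" for w
    using c5n[OF assms(1-7)] assms(3) sym[OF assms(7)] by blast
  have N1: "E c1 w \<longleftrightarrow> w = c2 \<or> w = c0" for w
    using c5n[OF cC(1) d1(1) assms(4,5,6,7,3)] assms(4) sym[OF assms(3)] by blast
  have N2: "E c2 w \<longleftrightarrow> w = c3 \<or> w = c1" for w
    using c5n[OF cC(2) d1(2) assms(5,6,7,3,4)] assms(5) sym[OF assms(4)] by blast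
  have N3: "E c3 w \<longleftrightarrow> w = c4 \<or> w = c2" for w
    using c5n[OF cC(3) d1(3) assms(6,7,3,4,5)] assms(6) sym[OF assms(5)] by blast
  have N4: "E c4 w \<longleftrightarrow> w = c0 \<or> w = c3" for w
    using c5n[OF cC(4) d1(4) assms(7,3,4,5,6)] assms(7) sym[OF assms(6)] by blast
  define S where "S = {c0,c1,c2,c3,c4}"
  have CS: "C = S"
  proof
    show "S \<subseteq> C" using assms(1) cC unfolding S_def by blast
    show "C \<subseteq> S"
    proof
      fix u assume "u \<in> C"
      then have "E\<^sup>*\<^sup>* c0 u" using reach assms(1) by blast
      then show "u \<in> S"
      proof (induction rule: rtranclp_induct)
        case base then show ?case unfolding S_def by simp
      next
        case (step y z)
        then show ?case unfolding S_def using N0 N1 N2 N3 N4 by auto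
      qed
    qed
  qed
  define f where "f = (\<lambda>z. if z = c0 then 0::nat else if z = c1 then 1 else if z = c2 then 2
     else if z = c3 then 3 else 4)"
  have fv: "f c0 = 0" "f c1 = 1" "f c2 = 2" "f c3 = 3" "f c4 = 4"
    using assms(2) unfolding f_def by auto
  have r5: "{0..<5::nat} = {0,1,2,3,4}" by auto
  have "bij_betw f S {0..<5}"
    unfolding bij_betw_def inj_on_def r5 S_def using fv assms(2) by auto
  moreover have "\<forall>p\<in>S. \<forall>q\<in>S. E p q \<longleftrightarrow> cycle_edge 5 (f p) (f q)"
    unfolding S_def using fv assms(2) by (auto simp: N0 N1 N2 N3 N4 cycle_edge_def)
  ultimately show ?thesis unfolding graph_iso_def CS by blast
qed


definition sq where "sq a x b y \<longleftrightarrow> a \<in> C \<and> distinct [a,x,b,y] \<and> E a x \<and> E x b \<and> E b y \<and> E y a"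

lemma sq_rot: "sq a x b y \<Longrightarrow> sq x b y a"
  unfolding sq_def using closed by auto

lemma sqD: assumes "sq a x b y"
  shows "a \<in> C" "x \<in> C" "b \<in> C" "y \<in> C" "E a x" "E x b" "E b y" "E y a"
    "E x a" "E b x" "E y b" "E a y" "distinct [a,x,b,y]"
  using assms closed sym unfolding sq_def by blast+

lemma L1: assumes "sq a x b y" "z \<notin> {a,x,b,y}" "E z a" "E z w" shows "w = a \<or> w = b"
proof (rule ccontr)
  assume nw: "\<not> (w = a \<or> w = b)"
  note s = sqD[OF assms(1)]
  have zC: "z \<in> C" using closed[OF s(1) sym[OF assms(3)]] .
  have wC: "w \<in> C" using closed[OF zC assms(4)] .
  have "w \<noteq> z" using assms(4) irr by blast
  moreover have "w \<noteq> x" using tri[OF zC assms(3) s(5)] assms(4) by blast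
  moreover have "w \<noteq> y" using tri[OF zC assms(3) s(12)] assms(4) by blast
  ultimately have "distinct [w,z,a,x,b,y]" using nw assms(2) s(13) by auto
  then show False using p6[OF wC sym[OF assms(4)] assms(3) s(5,6,7)] by blast
qed

lemma L1b: assumes "sq a x b y" "z \<notin> {a,x,b,y}" "E z a" shows "E z b"
proof -
  have zC: "z \<in> C" using closed[OF sqD(1)[OF assms(1)] sym[OF assms(3)]] .
  obtain w where "E z w" "w \<noteq> a" using nb2[OF zC assms(3)] by blast
  then show ?thesis using L1[OF assms(1,2,3)] by blast
qed

lemma L2: assumes "sq a x b y" "z \<notin> {a,x,b,y}" "E z a" "w \<notin> {a,x,b,y}" "E w x" shows False
proof -
  note s = sqD[OF assms(1)]
  have s2: "sq x b y a" using sq_rot[OF assms(1)] .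
  have wy: "E w y" using L1b[OF s2 _ assms(5)] assms(4) by auto
  have zC: "z \<in> C" using closed[OF s(1) sym[OF assms(3)]] .
  have "z \<noteq> w" using L1[OF assms(1,2,3), of x] s(13) assms(5) by auto
  then have "distinct [z,a,x,w,y,b]" using assms(2,4) s(13) by auto
  then show False using p6[OF zC assms(3) s(5) sym[OF assms(5)] wy s(11)] by blast
qed


lemma Kcase: assumes sqa: "sq a x b y" and H: "\<forall>w. w \<notin> {a,x,b,y} \<longrightarrow> \<not> E w x"
  shows "graph_iso C E {0..<4} (cycle_edge 4)
    \<or> (\<exists>m. m \<ge> 4 \<and> even m \<and> graph_iso C E {0..<m+2} (K2m_edge m))"
proof -
  note s = sqD[OF sqa]
  have sq2: "sq x b y a" using sq_rot[OF sqa] .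
  have sq3: "sq b y a x" using sq_rot[OF sq2] .
  have sq4: "sq y a x b" using sq_rot[OF sq3] .
  define T where "T = {t. E a t}"
  have xT: "x \<in> T" and yT: "y \<in> T" using s unfolding T_def by auto
  have aT: "a \<notin> T" using irr unfolding T_def by auto
  have nab: "\<not> E a b" using tri[OF s(1) s(5) s(6)] by blast
  have bT: "b \<notin> T" using nab unfolding T_def by auto
  have nbx: "E x w \<longleftrightarrow> w = a \<or> w = b" for w
  proof
    assume e: "E x w"
    show "w = a \<or> w = b"
    proof (cases "w \<in> {a,x,b,y}")
      case True
      moreover have "w \<noteq> x" using e irr by blast
      moreover have "w \<noteq> y" using tri[OF s(1) s(5) _ s(12)] e by blast
      ultimately show ?thesis by blast
    next
      case False
      then show ?thesis using H sym[OF e] by blast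
    qed
  next
    assume "w = a \<or> w = b" then show "E x w" using s by blast
  qed
  have nby: "E y w \<longleftrightarrow> w = a \<or> w = b" for w
  proof
    assume e: "E y w"
    show "w = a \<or> w = b"
    proof (cases "w \<in> {a,x,b,y}")
      case True
      moreover have "w \<noteq> y" using e irr by blast
      moreover have "w \<noteq> x" using tri[OF s(1) s(12) _ s(5)] e by blast
      ultimately show ?thesis by blast
    next
      case False
      then have "w \<notin> {y,a,x,b}" by auto
      then have "E w x" using L1b[OF sq4 _ sym[OF e]] by blast
      then show ?thesis using H False by blast
    qed
  next
    assume "w = a \<or> w = b" then show "E y w" using s by blast
  qed
  have nbT: "E t w \<longleftrightarrow> w = a \<or> w = b" if tT: "t \<in> T" for t w
  proof (cases "t = x \<or> t = y")
    case True then show ?thesis using nbx nby by blast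
  next
    case False
    have ta: "E t a" using tT sym unfolding T_def by blast
    have tq: "t \<notin> {a,x,b,y}" using False tT aT bT by auto
    show ?thesis
    proof
      assume "E t w" then show "w = a \<or> w = b" using L1[OF sqa tq ta] by blast
    next
      assume "w = a \<or> w = b" then show "E t w" using ta L1b[OF sqa tq ta] by blast
    qed
  qed
  have nbB: "E b w \<longleftrightarrow> w \<in> T" for w
  proof
    assume e: "E b w"
    show "w \<in> T"
    proof (cases "w \<in> {a,x,b,y}")
      case True
      moreover have "w \<noteq> b" using e irr by blast
      moreover have "w \<noteq> a" using nab e sym by blast
      ultimately show ?thesis using xT yT by blast
    next
      case False
      then have "w \<notin> {b,y,a,x}" by auto
      then have "E w a" using L1b[OF sq3 _ sym[OF e]] by blast
      then show ?thesis unfolding T_def using sym by blast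
    qed
  next
    assume "w \<in> T" then show "E b w" using nbT sym by blast
  qed
  define S where "S = {a,b} \<union> T"
  have TC: "T \<subseteq> C" unfolding T_def using closed s(1) by blast
  have CS: "C = S"
  proof
    show "S \<subseteq> C" using s TC unfolding S_def by blast
    show "C \<subseteq> S"
    proof
      fix u assume "u \<in> C"
      then have "E\<^sup>*\<^sup>* a u" using reach s(1) by blast
      then show "u \<in> S"
      proof (induction rule: rtranclp_induct)
        case base then show ?case unfolding S_def by simp
      next
        case (step p q)
        then have "p = a \<or> p = b \<or> p \<in> T" unfolding S_def by blast
        moreover have "p = a \<Longrightarrow> q \<in> T" using step(2) unfolding T_def by blast
        moreover have "p = b \<Longrightarrow> q \<in> T" using step(2) nbB by blast
        moreover have "p \<in> T \<Longrightarrow> q = a \<or> q = b" using step(2) nbT by blast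
        ultimately show ?case unfolding S_def by blast
      qed
    qed
  qed
  have "T \<subseteq> V" unfolding T_def using inV(2) by blast
  then have finT: "finite T" using finite_subset finV by blast
  have aV: "a \<in> V" using inV s by blast
  have "{u \<in> V. E a u} = T" unfolding T_def using inV(2) by blast
  then have degT: "degree V E a = card T" unfolding degree_def by simp
  have evT: "even (card T)" using ev aV degT by metis
  show ?thesis
  proof (cases "T = {x,y}")
    case True
    then have S4: "S = {a,x,b,y}" unfolding S_def by auto
    have NA: "E a w \<longleftrightarrow> w = x \<or> w = y" for w using True unfolding T_def by blast
    have NB: "E b w \<longleftrightarrow> w = x \<or> w = y" for w using True nbB by blast
    define f where "f = (\<lambda>z. if z = a then 0::nat else if z = x then 1 else if z = b then 2 else 3)"
    have fv: "f a = 0" "f x = 1" "f b = 2" "f y = 3"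
      using s(13) unfolding f_def by auto
    have r4: "{0..<4::nat} = {0,1,2,3}" by auto
    have "bij_betw f S {0..<4}"
      unfolding bij_betw_def inj_on_def r4 S4 using fv s(13) by auto
    moreover have "\<forall>p\<in>S. \<forall>q\<in>S. E p q \<longleftrightarrow> cycle_edge 4 (f p) (f q)"
      unfolding S4 using fv s(13) by (auto simp: NA NB nbx nby cycle_edge_def)
    ultimately show ?thesis unfolding graph_iso_def CS by blast
  next
    case False
    then obtain t where tT: "t \<in> T" "t \<noteq> x" "t \<noteq> y" using xT yT by blast
    have "card {x,y,t} \<le> card T" using card_mono[OF finT] xT yT tT by auto
    moreover have "card {x,y,t} = 3" using tT s(13) by auto
    ultimately have m3: "card T \<ge> 3" by simp
    define m where "m = card T"
    have m4: "m \<ge> 4" using m3 evT unfolding m_def by presburger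
    obtain h where h: "bij_betw h T {0..<m}" using ex_bij_betw_finite_nat[OF finT] unfolding m_def by blast
    define f where "f = (\<lambda>z. if z = a then 0::nat else if z = b then 1 else h z + 2)"
    have ab: "a \<noteq> b" using s(13) by auto
    have fa: "f a = 0" and fb: "f b = 1" using ab unfolding f_def by auto
    have fT: "t \<in> T \<Longrightarrow> f t = h t + 2" for t using aT bT unfolding f_def by auto
    have hT: "t \<in> T \<Longrightarrow> h t < m" for t using h unfolding bij_betw_def by auto
    have hinj: "inj_on h T" using h unfolding bij_betw_def by auto
    have fge: "t \<in> T \<Longrightarrow> f t \<ge> 2" for t using fT by simp
    have "inj_on f S"
    proof (rule inj_onI)
      fix p q assume pS: "p \<in> S" and qS: "q \<in> S" and fpq: "f p = f q"
      have pc: "p = a \<or> p = b \<or> p \<in> T" using pS unfolding S_def by blast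
      have qc: "q = a \<or> q = b \<or> q \<in> T" using qS unfolding S_def by blast
      show "p = q"
      proof (cases "p \<in> T")
        case pT: True
        show ?thesis
        proof (cases "q \<in> T")
          case True
          then have "h p = h q" using fT pT fpq by simp
          then show ?thesis using inj_onD[OF hinj _ pT True] by blast
        next
          case False
          then have "f q < 2" using qc fa fb by auto
          then show ?thesis using fge[OF pT] fpq by simp
        qed
      next
        case pT: False
        then have fp2: "f p < 2" using pc fa fb by auto
        show ?thesis
        proof (cases "q \<in> T")
          case True
          then show ?thesis using fge[OF True] fpq fp2 by simp
        next
          case False
          then show ?thesis using pc qc pT fa fb fpq by auto
        qed
      qed
    qed
    moreover have "f ` S = {0..<m+2}"
    proof
      show "f ` S \<subseteq> {0..<m+2}"
      proof
        fix n assume "n \<in> f ` S"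
        then obtain p where pS: "p \<in> S" and n: "n = f p" by blast
        have "p = a \<or> p = b \<or> p \<in> T" using pS unfolding S_def by blast
        then show "n \<in> {0..<m+2}"
        proof (elim disjE)
          assume "p \<in> T" then show ?thesis using fT hT n by simp
        qed (use n fa fb in simp_all)
      qed
      show "{0..<m+2} \<subseteq> f ` S"
      proof
        fix n assume n: "n \<in> {0..<m+2}"
        show "n \<in> f ` S"
        proof (cases "n < 2")
          case True
          then have "n = 0 \<or> n = 1" by auto
          moreover have "a \<in> S" "b \<in> S" unfolding S_def by auto
          ultimately show ?thesis using fa fb by (metis imageI)
        next
          case False
          then have "n - 2 \<in> {0..<m}" using n by auto
          then have "n - 2 \<in> h ` T" using h unfolding bij_betw_def by simp
          then obtain u where "u \<in> T" "h u = n - 2" by (metis imageE)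
          then have "f u = n" using fT False by auto
          then show ?thesis unfolding S_def using \<open>u \<in> T\<close> by blast
        qed
      qed
    qed
    ultimately have bij: "bij_betw f S {0..<m+2}" unfolding bij_betw_def by blast
    have "E p q \<longleftrightarrow> K2m_edge m (f p) (f q)" if "p \<in> S" "q \<in> S" for p q
    proof -
      have key: "E p q \<longleftrightarrow> ((p = a \<or> p = b) \<and> q \<in> T) \<or> ((q = a \<or> q = b) \<and> p \<in> T)"
        using that aT bT nbB nbT[of p q] unfolding S_def T_def by auto
      have sm: "z \<in> S \<Longrightarrow> (f z < 2 \<longleftrightarrow> z = a \<or> z = b) \<and> f z < m + 2 \<and> (z \<in> T \<longleftrightarrow> \<not> (z = a \<or> z = b))" for z
        unfolding S_def using fa fb fT hT aT bT by auto
      show ?thesis unfolding key K2m_edge_def using sm[OF that(1)] sm[OF that(2)] by auto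
    qed
    then have "graph_iso C E {0..<m+2} (K2m_edge m)" unfolding graph_iso_def CS using bij by blast
    then show ?thesis using m4 evT unfolding m_def by blast
  qed
qed

end

theorem claim4:
  fixes V :: "'a set" and E :: "'a \<Rightarrow> 'a \<Rightarrow> bool" and C :: "'a set"
  assumes "simple_graph V E"
    and "\<forall>v\<in>V. \<exists>u. E v u"
    and "\<forall>v\<in>V. even (degree V E v)"
    and "is_component V E C"
  shows "has_triangle C E \<or> has_path C E 5
    \<or> graph_iso C E {0..<4} (cycle_edge 4)
    \<or> graph_iso C E {0..<5} (cycle_edge 5)
    \<or> (\<exists>m. m \<ge> 4 \<and> even m \<and> graph_iso C E {0..<m+2} (K2m_edge m))"
proof (cases "has_triangle C E \<or> has_path C E 5")
  case True then show ?thesis by blast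
next
  case False
  interpret G V E C using assms False by (simp add: G_def)
  have "graph_iso C E {0..<4} (cycle_edge 4)
    \<or> graph_iso C E {0..<5} (cycle_edge 5)
    \<or> (\<exists>m. m \<ge> 4 \<and> even m \<and> graph_iso C E {0..<m+2} (K2m_edge m))"
    using cyc
  proof (elim disjE exE conjE)
    fix a x b y assume "a \<in> C" "distinct [a, x, b, y]" "E a x" "E x b" "E b y" "E y a"
    then have sqa: "sq a x b y" unfolding sq_def by blast
    have sq2: "sq x b y a" using sq_rot[OF sqa] .
    have sq3: "sq b y a x" using sq_rot[OF sq2] .
    show ?thesis
    proof (cases "\<exists>w. w \<notin> {a,x,b,y} \<and> E w x")
      case True
      then obtain w0 where w0: "w0 \<notin> {a,x,b,y}" "E w0 x" by blast
      have "\<forall>w. w \<notin> {x,b,y,a} \<longrightarrow> \<not> E w b"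
      proof (intro allI impI notI)
        fix w assume wq: "w \<notin> {x,b,y,a}" and e: "E w b"
        have "w \<notin> {b,y,a,x}" using wq by auto
        then have "E w a" using L1b[OF sq3 _ e] by blast
        moreover have "w \<notin> {a,x,b,y}" using wq by auto
        ultimately show False using L2[OF sqa _ _ w0] by blast
      qed
      then show ?thesis using Kcase[OF sq2] by blast
    next
      case False
      then have "\<forall>w. w \<notin> {a,x,b,y} \<longrightarrow> \<not> E w x" by blast
      then show ?thesis using Kcase[OF sqa] by blast
    qed
  next
    fix c0 c1 c2 c3 c4 assume "c0 \<in> C" "distinct [c0, c1, c2, c3, c4]" "E c0 c1" "E c1 c2"
      "E c2 c3" "E c3 c4" "E c4 c0"
    then show ?thesis using c5 by blast
  qed
  then show ?thesis by blast
qed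

end
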